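(* Let $\mathcal M=(M,<,+,0,\ldots)$ be a definably complete locally o-minimal expansion of an ordered group. Let $(X,\tau)$ be a definably compact definable topological space and $\{U_t: t\in P\}$ a definable family of definable open subsets of $X$ with $X=\bigcup_{t\in P}U_t$. Then there exists a definable bounded subset $Q$ of $P$ such that $X=\bigcup_{t\in Q}U_t$.
   Context: "Definable" means definable in $\mathcal M$ with parameters. $\mathcal M$ is an expansion of an ordered group with dense order without endpoints; locally o-minimal: for every definable $Y\subseteq M$ and $a\in M$ there is an open interval $I\ni a$ with $Y\cap I$ a finite union of points and open intervals; definably complete: every definable subset of $M$ has sup and inf in $M\cup\{\pm\infty\}$. A family $\{U_t:t\in P\}$ is definable if $P\subseteq M^n$ and $\bigcup_t\{t\}\times U_t$ are definable; "bounded" for $Q\subseteq P\subseteq M^n$ means bounded in $M^n$. A definable topological space is a definable set with a topology having a definable family as open base; it is definably compact if every definable filtered family (for any two members some member lies in their intersection) of nonempty closed subsets has nonempty intersection. *)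

theory Defs
  imports "HOL-Analysis.Analysis"
begin

text \<open>The sets of S are exactly the sets
  definable (with parameters) in some expansion of (M,<,+), once S contains
  the singletons, the order and the graph of +.\<close>

definition Mpow :: "nat \<Rightarrow> 'a list set" where
  "Mpow n = {xs. length xs = n}"

definition is_structure :: "(nat \<Rightarrow> 'a list set set) \<Rightarrow> bool" where
  "is_structure S \<longleftrightarrow>
     (\<forall>n. \<forall>A\<in>S n. A \<subseteq> Mpow n) \<and>
     (\<forall>n. Mpow n \<in> S n) \<and>
     (\<forall>n. \<forall>A\<in>S n. Mpow n - A \<in> S n) \<and>
     (\<forall>n. \<forall>A\<in>S n. \<forall>B\<in>S n. A \<union> B \<in> S n) \<and>
     (\<forall>n. \<forall>A\<in>S n. {y # xs | y xs. xs \<in> A} \<in> S (Suc n)) \<and>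
     (\<forall>n. \<forall>A\<in>S n. {xs @ [y] | xs y. xs \<in> A} \<in> S (Suc n)) \<and>
     (\<forall>n\<ge>1. {xs \<in> Mpow n. hd xs = last xs} \<in> S n) \<and>
     (\<forall>n. \<forall>A\<in>S (Suc n). butlast ` A \<in> S n)"

definition expansion_of_ordered_group :: "(nat \<Rightarrow> ('a::{linorder,group_add}) list set set) \<Rightarrow> bool" where
  "expansion_of_ordered_group S \<longleftrightarrow>
     is_structure S \<and>
     (\<forall>a. {[a]} \<in> S 1) \<and>
     {[x, y] | x y. x < y} \<in> S 2 \<and>
     {[x, y, x + y] | x y. True} \<in> S 3"

definition ordered_group_dense_no_endpoints :: "'a::{linorder,group_add} itself \<Rightarrow> bool" where
  "ordered_group_dense_no_endpoints _ \<longleftrightarrow>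
     (\<forall>x y z::'a. x < y \<longrightarrow> x + z < y + z \<and> z + x < z + y) \<and>
     (\<forall>x y::'a. x < y \<longrightarrow> (\<exists>z. x < z \<and> z < y)) \<and>
     (\<forall>x::'a. (\<exists>y. y < x) \<and> (\<exists>y. x < y))"

definition finite_union_points_intervals :: "('a::linorder) set \<Rightarrow> bool" where
  "finite_union_points_intervals A \<longleftrightarrow>
     (\<exists>F G. finite F \<and> finite G \<and> A = F \<union> (\<Union>(c,d)\<in>G. {c<..<d}))"

definition locally_o_minimal :: "(nat \<Rightarrow> ('a::linorder) list set set) \<Rightarrow> bool" where
  "locally_o_minimal S \<longleftrightarrow>
     (\<forall>Y\<in>S 1. \<forall>a. \<exists>l u. l < a \<and> a < u \<and>
        finite_union_points_intervals ({y. [y] \<in> Y} \<inter> {l<..<u}))"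

definition definably_complete :: "(nat \<Rightarrow> ('a::linorder) list set set) \<Rightarrow> bool" where
  "definably_complete S \<longleftrightarrow>
     (\<forall>Y\<in>S 1. let Y' = {y. [y] \<in> Y} in
        (Y' \<noteq> {} \<and> (\<exists>b. \<forall>y\<in>Y'. y \<le> b) \<longrightarrow>
           (\<exists>s. (\<forall>y\<in>Y'. y \<le> s) \<and> (\<forall>b. (\<forall>y\<in>Y'. y \<le> b) \<longrightarrow> s \<le> b))) \<and>
        (Y' \<noteq> {} \<and> (\<exists>b. \<forall>y\<in>Y'. b \<le> y) \<longrightarrow>
           (\<exists>s. (\<forall>y\<in>Y'. s \<le> y) \<and> (\<forall>b. (\<forall>y\<in>Y'. b \<le> y) \<longrightarrow> b \<le> s))))"

definition definable_family ::
    "(nat \<Rightarrow> 'a list set set) \<Rightarrow> nat \<Rightarrow> nat \<Rightarrow> 'a list set \<Rightarrow> ('a list \<Rightarrow> 'a list set) \<Rightarrow> bool" where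
  "definable_family S n m P U \<longleftrightarrow>
     P \<in> S n \<and> (\<forall>t\<in>P. U t \<subseteq> Mpow m) \<and> {t @ x | t x. t \<in> P \<and> x \<in> U t} \<in> S (n + m)"

definition definable_top_space ::
    "(nat \<Rightarrow> 'a list set set) \<Rightarrow> nat \<Rightarrow> 'a list topology \<Rightarrow> bool" where
  "definable_top_space S m T \<longleftrightarrow>
     topspace T \<in> S m \<and>
     (\<exists>k \<Sigma> B. definable_family S k m \<Sigma> B \<and>
        (\<forall>s\<in>\<Sigma>. openin T (B s)) \<and>
        (\<forall>W. openin T W \<longrightarrow> (\<forall>x\<in>W. \<exists>s\<in>\<Sigma>. x \<in> B s \<and> B s \<subseteq> W)))"

definition definably_compact ::
    "(nat \<Rightarrow> 'a list set set) \<Rightarrow> nat \<Rightarrow> 'a list topology \<Rightarrow> bool" where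
  "definably_compact S m T \<longleftrightarrow>
     (\<forall>k \<Sigma> C. definable_family S k m \<Sigma> C \<and> \<Sigma> \<noteq> {} \<and>
        (\<forall>s\<in>\<Sigma>. closedin T (C s) \<and> C s \<noteq> {}) \<and>
        (\<forall>s1\<in>\<Sigma>. \<forall>s2\<in>\<Sigma>. \<exists>s3\<in>\<Sigma>. C s3 \<subseteq> C s1 \<inter> C s2)
        \<longrightarrow> {x \<in> topspace T. \<forall>s\<in>\<Sigma>. x \<in> C s} \<noteq> {})"

definition bounded_in_Mpow :: "nat \<Rightarrow> ('a::linorder) list set \<Rightarrow> bool" where
  "bounded_in_Mpow n Q \<longleftrightarrow> (\<exists>a b. \<forall>t\<in>Q. \<forall>i<n. a < t ! i \<and> t ! i < b)"

end

theory Submission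
  imports Defs
begin

lemma st_sub: "is_structure S \<Longrightarrow> A \<in> S n \<Longrightarrow> A \<subseteq> Mpow n"
  unfolding is_structure_def by blast

lemma st_univ: "is_structure S \<Longrightarrow> Mpow n \<in> S n"
  unfolding is_structure_def by blast

lemma st_cons: "is_structure S \<Longrightarrow> A \<in> S n \<Longrightarrow> {y # xs | y xs. xs \<in> A} \<in> S (Suc n)"
  unfolding is_structure_def by blast

lemma st_snoc: "is_structure S \<Longrightarrow> A \<in> S n \<Longrightarrow> {xs @ [y] | xs y. xs \<in> A} \<in> S (Suc n)"
  unfolding is_structure_def by blast

lemma st_conj:
  assumes st: "is_structure S" and "{ys \<in> Mpow k. P1 ys} \<in> S k" and "{ys \<in> Mpow k. P2 ys} \<in> S k"
  shows "{ys \<in> Mpow k. P1 ys \<and> P2 ys} \<in> S k"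
proof -
  let ?A = "{ys \<in> Mpow k. P1 ys}" and ?B = "{ys \<in> Mpow k. P2 ys}"
  have "Mpow k - ?A \<in> S k" "Mpow k - ?B \<in> S k" using st assms unfolding is_structure_def by blast+
  then have "(Mpow k - ?A) \<union> (Mpow k - ?B) \<in> S k" using st unfolding is_structure_def by blast
  then have "Mpow k - ((Mpow k - ?A) \<union> (Mpow k - ?B)) \<in> S k" using st unfolding is_structure_def by blast
  moreover have "Mpow k - ((Mpow k - ?A) \<union> (Mpow k - ?B)) = {ys \<in> Mpow k. P1 ys \<and> P2 ys}" by auto
  ultimately show ?thesis by simp
qed

lemma st_neg:
  assumes st: "is_structure S" and "{ys \<in> Mpow k. P1 ys} \<in> S k"
  shows "{ys \<in> Mpow k. \<not> P1 ys} \<in> S k"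
proof -
  have "Mpow k - {ys \<in> Mpow k. P1 ys} \<in> S k" using st assms unfolding is_structure_def by blast
  moreover have "Mpow k - {ys \<in> Mpow k. P1 ys} = {ys \<in> Mpow k. \<not> P1 ys}" by auto
  ultimately show ?thesis by simp
qed

lemma st_all:
  fixes N :: nat
  assumes st: "is_structure S" and "\<And>i. i < N \<Longrightarrow> {ys \<in> Mpow k. Q i ys} \<in> S k"
  shows "{ys \<in> Mpow k. \<forall>i<N. Q i ys} \<in> S k"
  using assms(2)
proof (induction N)
  case 0
  then show ?case using st_univ[OF st] by simp
next
  case (Suc N)
  have "{ys \<in> Mpow k. (\<forall>i<N. Q i ys) \<and> Q N ys} \<in> S k"
    by (rule st_conj[OF st]) (use Suc in auto)
  moreover have "{ys \<in> Mpow k. (\<forall>i<N. Q i ys) \<and> Q N ys} = {ys \<in> Mpow k. \<forall>i<Suc N. Q i ys}"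
    using less_Suc_eq by auto
  ultimately show ?case by simp
qed

lemma lcyl:
  assumes st: "is_structure S" and A: "A \<in> S n"
  shows "{xs \<in> Mpow (k+n). drop k xs \<in> A} \<in> S (k+n)"
proof (induction k)
  case 0
  have "{xs \<in> Mpow (0+n). drop 0 xs \<in> A} = A" using st_sub[OF st A] by auto
  then show ?case using A by simp
next
  case (Suc k)
  define B where "B = {xs \<in> Mpow (k+n). drop k xs \<in> A}"
  have "{xs \<in> Mpow (Suc k+n). drop (Suc k) xs \<in> A} = {y # xs | y xs. xs \<in> B}"
    unfolding B_def
  proof (rule set_eqI, rule iffI)
    fix ws assume "ws \<in> {xs \<in> Mpow (Suc k+n). drop (Suc k) xs \<in> A}"
    then show "ws \<in> {y # xs | y xs. xs \<in> {xs \<in> Mpow (k+n). drop k xs \<in> A}}"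
      by (cases ws) (auto simp: Mpow_def)
  qed (auto simp: Mpow_def)
  moreover have "{y # xs | y xs. xs \<in> B} \<in> S (Suc (k+n))" using st_cons[OF st Suc[folded B_def]] .
  ultimately show ?case by simp
qed

lemma rcyl:
  assumes st: "is_structure S" and A: "A \<in> S n"
  shows "{xs \<in> Mpow (n+k). take n xs \<in> A} \<in> S (n+k)"
proof (induction k)
  case 0
  have "{xs \<in> Mpow (n+0). take n xs \<in> A} = A" using st_sub[OF st A] by (auto simp: Mpow_def)
  then show ?case using A by simp
next
  case (Suc k)
  define B where "B = {xs \<in> Mpow (n+k). take n xs \<in> A}"
  have "{xs \<in> Mpow (n+Suc k). take n xs \<in> A} = {xs @ [y] | xs y. xs \<in> B}"
    unfolding B_def
  proof (rule set_eqI, rule iffI)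
    fix ws assume w: "ws \<in> {xs \<in> Mpow (n+Suc k). take n xs \<in> A}"
    then have ne: "ws \<noteq> []" by (auto simp: Mpow_def)
    have e: "ws = butlast ws @ [last ws]" using ne by simp
    have "take n (butlast ws) = take n ws" using w by (auto simp: Mpow_def butlast_conv_take min_def)
    then have "butlast ws \<in> {xs \<in> Mpow (n+k). take n xs \<in> A}" using w by (auto simp: Mpow_def)
    then show "ws \<in> {xs @ [y] | xs y. xs \<in> {xs \<in> Mpow (n+k). take n xs \<in> A}}"
      using e by blast
  qed (auto simp: Mpow_def)
  moreover have "{xs @ [y] | xs y. xs \<in> B} \<in> S (Suc (n+k))" using st_snoc[OF st Suc[folded B_def]] .
  ultimately show ?case by simp
qed

lemma proj:
  assumes st: "is_structure S"
  shows "A \<in> S (n+k) \<Longrightarrow> take n ` A \<in> S n"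
proof (induction k arbitrary: A)
  case 0
  have "\<forall>xs\<in>A. take n xs = xs" using st_sub[OF st 0(1)] by (auto simp: Mpow_def)
  then have "take n ` A = A" by force
  then show ?case using 0 by simp
next
  case (Suc k)
  have "butlast ` A \<in> S (n+k)" using Suc(2) st unfolding is_structure_def by simp
  then have "take n ` (butlast ` A) \<in> S n" using Suc.IH by blast
  moreover have "take n ` (butlast ` A) = take n ` A"
  proof -
    have "\<forall>xs\<in>A. take n (butlast xs) = take n xs"
      using st_sub[OF st Suc(2)] by (auto simp: Mpow_def butlast_conv_take min_def)
    then show ?thesis by (auto simp: image_image)
  qed
  ultimately show ?case by simp
qed

definition Eqset :: "nat \<Rightarrow> nat \<Rightarrow> nat \<Rightarrow> 'a list set" where
  "Eqset N i j = {ws \<in> Mpow N. ws ! i = ws ! j}"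

lemma eqset_lt:
  assumes st: "is_structure S" and ij: "i < j" "j < N"
  shows "Eqset N i j \<in> S N"
proof -
  define L where "L = j + 1 - i"
  define r where "r = N - j - 1"
  have L1: "L \<ge> 1" unfolding L_def using ij by simp
  have D: "{xs \<in> Mpow L. hd xs = last xs} \<in> S L" using st L1 unfolding is_structure_def by blast
  have R1: "{xs \<in> Mpow (L+r). take L xs \<in> {xs \<in> Mpow L. hd xs = last xs}} \<in> S (L+r)"
    by (rule rcyl[OF st D])
  have R2: "{xs \<in> Mpow (i+(L+r)). drop i xs \<in> {xs \<in> Mpow (L+r). take L xs \<in> {xs \<in> Mpow L. hd xs = last xs}}} \<in> S (i+(L+r))"
    by (rule lcyl[OF st R1])
  have N: "i + (L + r) = N" unfolding L_def r_def using ij by simp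
  have "{xs \<in> Mpow N. drop i xs \<in> {xs \<in> Mpow (L+r). take L xs \<in> {xs \<in> Mpow L. hd xs = last xs}}} = (Eqset N i j :: 'a list set)"
  proof (rule set_eqI)
    fix xs :: "'a list"
    show "xs \<in> {xs \<in> Mpow N. drop i xs \<in> {xs \<in> Mpow (L+r). take L xs \<in> {xs \<in> Mpow L. hd xs = last xs}}} \<longleftrightarrow> xs \<in> Eqset N i j"
    proof (cases "length xs = N")
      case True
      have ne: "take L (drop i xs) \<noteq> []" using True ij L1 unfolding L_def by simp
      have len: "length (take L (drop i xs)) = L" using True ij unfolding L_def by simp
      have h: "hd (take L (drop i xs)) = xs ! i" using ne True ij L1 by (simp add: hd_conv_nth)
      have l: "last (take L (drop i xs)) = xs ! j" using ne len True ij L1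
        by (simp add: last_conv_nth L_def)
      show ?thesis using True N h l len by (auto simp: Mpow_def Eqset_def)
    next
      case False
      then show ?thesis by (auto simp: Mpow_def Eqset_def)
    qed
  qed
  then show ?thesis using R2 N by simp
qed

lemma eqset:
  assumes st: "is_structure S" and ij: "i < N" "j < N"
  shows "Eqset N i j \<in> S N"
proof -
  consider "i < j" | "i = j" | "j < i" by linarith
  then show ?thesis
  proof cases
    case 1 then show ?thesis using eqset_lt[OF st 1 ij(2)] by simp
  next
    case 2 then have "(Eqset N i j :: 'a list set) = Mpow N" by (auto simp: Eqset_def)
    then show ?thesis using st_univ[OF st] by simp
  next
    case 3 then have "(Eqset N i j :: 'a list set) = Eqset N j i" by (auto simp: Eqset_def)
    then show ?thesis using eqset_lt[OF st 3 ij(1)] by simp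
  qed
qed


lemma pre:
  assumes st: "is_structure S" and A: "A \<in> S n" and f: "\<forall>i<n. f i < k"
  shows "{ys \<in> Mpow k. map (\<lambda>i. ys ! (f i)) [0..<n] \<in> A} \<in> S k"
proof -
  have W0: "{xs \<in> Mpow (k+n). drop k xs \<in> A} \<in> S (k+n)" by (rule lcyl[OF st A])
  have E: "{ws \<in> Mpow (k+n). \<forall>i<n. ws \<in> Eqset (k+n) (f i) (k+i)} \<in> S (k+n)"
  proof (rule st_all[OF st])
    fix i assume "i < n"
    then have "Eqset (k+n) (f i) (k+i) \<in> S (k+n)" using f by (intro eqset[OF st]) auto
    moreover have "{ws \<in> Mpow (k+n). ws \<in> Eqset (k+n) (f i) (k+i)} = (Eqset (k+n) (f i) (k+i) :: 'a list set)"
      by (auto simp: Eqset_def)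
    ultimately show "{ws \<in> Mpow (k+n). ws \<in> Eqset (k+n) (f i) (k+i)} \<in> S (k+n)" by simp
  qed
  have W: "{ws \<in> Mpow (k+n). drop k ws \<in> A \<and> (\<forall>i<n. ws \<in> Eqset (k+n) (f i) (k+i))} \<in> S (k+n)"
    by (rule st_conj[OF st W0 E])
  have "take k ` {ws \<in> Mpow (k+n). drop k ws \<in> A \<and> (\<forall>i<n. ws \<in> Eqset (k+n) (f i) (k+i))} \<in> S k"
    by (rule proj[OF st W])
  moreover have "take k ` {ws \<in> Mpow (k+n). drop k ws \<in> A \<and> (\<forall>i<n. ws \<in> Eqset (k+n) (f i) (k+i))}
     = {ys \<in> Mpow k. map (\<lambda>i. ys ! (f i)) [0..<n] \<in> A}"
  proof (rule set_eqI, rule iffI)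
    fix ys assume "ys \<in> take k ` {ws \<in> Mpow (k+n). drop k ws \<in> A \<and> (\<forall>i<n. ws \<in> Eqset (k+n) (f i) (k+i))}"
    then obtain ws where ws: "ws \<in> Mpow (k+n)" "drop k ws \<in> A" "\<forall>i<n. ws \<in> Eqset (k+n) (f i) (k+i)"
      and ys: "ys = take k ws" by blast
    have "map (\<lambda>i. ys ! (f i)) [0..<n] = drop k ws"
    proof (rule nth_equalityI)
      show "length (map (\<lambda>i. ys ! f i) [0..<n]) = length (drop k ws)" using ws by (simp add: Mpow_def)
      fix i assume "i < length (map (\<lambda>i. ys ! f i) [0..<n])"
      then have i: "i < n" by simp
      then have "ws ! f i = ws ! (k+i)" using ws(3) by (simp add: Eqset_def)
      then show "map (\<lambda>i. ys ! f i) [0..<n] ! i = drop k ws ! i"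
        using i f ys ws(1) by (simp add: Mpow_def)
    qed
    then show "ys \<in> {ys \<in> Mpow k. map (\<lambda>i. ys ! (f i)) [0..<n] \<in> A}"
      using ws ys by (simp add: Mpow_def)
  next
    fix ys assume ys: "ys \<in> {ys \<in> Mpow k. map (\<lambda>i. ys ! (f i)) [0..<n] \<in> A}"
    define ws where "ws = ys @ map (\<lambda>i. ys ! (f i)) [0..<n]"
    have lk: "length ys = k" using ys by (simp add: Mpow_def)
    have "ws \<in> Mpow (k+n)" using lk by (simp add: ws_def Mpow_def)
    moreover have "drop k ws \<in> A" using ys lk by (simp add: ws_def)
    moreover have "\<forall>i<n. ws \<in> Eqset (k+n) (f i) (k+i)"
      using lk f calculation(1) by (simp add: ws_def Eqset_def nth_append)
    ultimately have "ws \<in> {ws \<in> Mpow (k+n). drop k ws \<in> A \<and> (\<forall>i<n. ws \<in> Eqset (k+n) (f i) (k+i))}" by simp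
    moreover have "take k ws = ys" using lk by (simp add: ws_def)
    ultimately show "ys \<in> take k ` {ws \<in> Mpow (k+n). drop k ws \<in> A \<and> (\<forall>i<n. ws \<in> Eqset (k+n) (f i) (k+i))}"
      by force
  qed
  ultimately show ?thesis by simp
qed

lemma pre2:
  assumes st: "is_structure S" and A: "A \<in> S n" and f: "\<forall>i<n. f i < k"
    and g: "\<forall>ys\<in>Mpow k. g ys = map (\<lambda>i. ys ! (f i)) [0..<n]"
  shows "{ys \<in> Mpow k. g ys \<in> A} \<in> S k"
proof -
  have "{ys \<in> Mpow k. g ys \<in> A} = {ys \<in> Mpow k. map (\<lambda>i. ys ! (f i)) [0..<n] \<in> A}"
    using g by auto
  then show ?thesis using pre[OF st A f] by simp
qed

lemma const_at:
  assumes st: "is_structure S" and c: "{[a]} \<in> S 1" and i: "i < k"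
  shows "{ys \<in> Mpow k. ys ! i = a} \<in> S k"
proof -
  have "{ys \<in> Mpow k. [ys ! i] \<in> {[a]}} \<in> S k"
    by (rule pre2[OF st c, where f="\<lambda>_. i"]) (use i in auto)
  then show ?thesis by simp
qed

lemma lt_at:
  assumes st: "is_structure S" and c: "{[x, y] | x y. x < y} \<in> S 2" and i: "i < k" "j < k"
  shows "{ys \<in> Mpow k. ys ! i < ys ! j} \<in> S k"
proof -
  have u: "[0..<2] = [0, 1::nat]" by (simp add: upt_rec)
  have "{ys \<in> Mpow k. [ys ! i, ys ! j] \<in> {[x, y] | x y. x < y}} \<in> S k"
    by (rule pre2[OF st c, where f="\<lambda>l. if l = 0 then i else j"]) (use i u in auto)
  then show ?thesis by simp
qed


lemma Qab_in:
  assumes st: "is_structure S" and c: "\<forall>a. {[a]} \<in> S 1"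
    and lt: "{[x, y] | x y. x < y} \<in> S 2" and P: "P \<in> S n"
  shows "{t \<in> P. \<forall>i<n. a < t ! i \<and> t ! i < b} \<in> S n"
proof -
  let ?W = "{ws \<in> Mpow (n+2). take n ws \<in> P \<and> (ws ! n = a \<and> (ws ! (Suc n) = b \<and>
               (\<forall>i<n. ws ! n < ws ! i \<and> ws ! i < ws ! (Suc n))))}"
  have "?W \<in> S (n+2)"
  proof (rule st_conj[OF st rcyl[OF st P]], rule st_conj[OF st], rule const_at[OF st])
    show "{[a]} \<in> S 1" using c by blast
    show "n < n + 2" by simp
    show "{ys \<in> Mpow (n + 2). ys ! Suc n = b \<and> (\<forall>i<n. ys ! n < ys ! i \<and> ys ! i < ys ! Suc n)} \<in> S (n + 2)"
    proof (rule st_conj[OF st], rule const_at[OF st])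
      show "{[b]} \<in> S 1" using c by blast
      show "Suc n < n + 2" by simp
      show "{ys \<in> Mpow (n + 2). \<forall>i<n. ys ! n < ys ! i \<and> ys ! i < ys ! Suc n} \<in> S (n + 2)"
        by (rule st_all[OF st], rule st_conj[OF st]; rule lt_at[OF st lt]) auto
    qed
  qed
  then have "take n ` ?W \<in> S n" by (rule proj[OF st])
  moreover have "take n ` ?W = {t \<in> P. \<forall>i<n. a < t ! i \<and> t ! i < b}"
  proof (rule set_eqI, rule iffI)
    fix t assume "t \<in> take n ` ?W"
    then obtain ws where ws: "ws \<in> ?W" and t: "t = take n ws" by blast
    then show "t \<in> {t \<in> P. \<forall>i<n. a < t ! i \<and> t ! i < b}" by auto
  next
    fix t assume t: "t \<in> {t \<in> P. \<forall>i<n. a < t ! i \<and> t ! i < b}"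
    then have lt: "length t = n" using st_sub[OF st P] by (auto simp: Mpow_def)
    have "t @ [a, b] \<in> ?W" using t lt by (auto simp: Mpow_def nth_append)
    moreover have "take n (t @ [a, b]) = t" using lt by simp
    ultimately show "t \<in> take n ` ?W" by force
  qed
  ultimately show ?thesis by simp
qed

lemma lower_bound:
  assumes "ordered_group_dense_no_endpoints TYPE('a::{linorder,group_add})" and "finite F"
  shows "\<exists>a::'a. \<forall>y\<in>F. a < y"
  using assms(2)
proof (induction F rule: finite_induct)
  case empty then show ?case by simp
next
  case (insert y F)
  then obtain a where a: "\<forall>y\<in>F. a < y" by blast
  obtain z where "z < min a y" using assms(1) unfolding ordered_group_dense_no_endpoints_def by blast
  then show ?case using a by force
qed

lemma upper_bound:
  assumes "ordered_group_dense_no_endpoints TYPE('a::{linorder,group_add})" and "finite F"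
  shows "\<exists>a::'a. \<forall>y\<in>F. y < a"
  using assms(2)
proof (induction F rule: finite_induct)
  case empty then show ?case by simp
next
  case (insert y F)
  then obtain a where a: "\<forall>y\<in>F. y < a" by blast
  obtain z where "max a y < z" using assms(1) unfolding ordered_group_dense_no_endpoints_def by blast
  then show ?case using a by force
qed

theorem theorem4p22:
  fixes S :: "nat \<Rightarrow> ('a::{linorder,group_add}) list set set"
    and T :: "'a list topology"
    and P :: "'a list set"
    and U :: "'a list \<Rightarrow> 'a list set"
    and m n :: nat
  assumes "ordered_group_dense_no_endpoints TYPE('a)"
    and "expansion_of_ordered_group S"
    and "locally_o_minimal S"
    and "definably_complete S"
    and "definable_top_space S m T"
    and "definably_compact S m T"
    and "definable_family S n m P U"
    and "\<forall>t\<in>P. openin T (U t)"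
    and "topspace T = (\<Union>t\<in>P. U t)"
  shows "\<exists>Q. Q \<subseteq> P \<and> Q \<in> S n \<and> bounded_in_Mpow n Q \<and> topspace T = (\<Union>t\<in>Q. U t)"
proof (rule ccontr)
  assume nq: "\<not> ?thesis"
  note dn = assms(1)
  have st: "is_structure S" and c: "\<forall>a. {[a]} \<in> S 1" and lt: "{[x, y] | x y. x < y} \<in> S 2"
    using assms(2) unfolding expansion_of_ordered_group_def by auto
  define X where "X = topspace T"
  have X: "X \<in> S m" using assms(5) unfolding definable_top_space_def X_def by blast
  have P: "P \<in> S n" and Um: "\<forall>t\<in>P. U t \<subseteq> Mpow m"
    and G: "{t @ x | t x. t \<in> P \<and> x \<in> U t} \<in> S (n + m)"
    using assms(7) unfolding definable_family_def by auto
  have Psub: "P \<subseteq> Mpow n" using st_sub[OF st P] .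
  have Xsub: "X \<subseteq> Mpow m" using st_sub[OF st X] .
  have UX: "\<forall>t\<in>P. U t \<subseteq> X" using assms(8) openin_subset unfolding X_def by blast
  define Qs where "Qs a b = {t \<in> P. \<forall>i<n. a < t ! i \<and> t ! i < b}" for a b
  define C where "C s = X - (\<Union>t\<in>Qs (s ! 0) (s ! 1). U t)" for s
  define \<Sigma> where "\<Sigma> = {[a, b] | a b. (a::'a) < b}"
  have Cne: "C [a, b] \<noteq> {}" for a b
  proof
    assume e: "C [a, b] = {}"
    have "Qs a b \<subseteq> P" unfolding Qs_def by blast
    moreover have "Qs a b \<in> S n" unfolding Qs_def by (rule Qab_in[OF st c lt P])
    moreover have "bounded_in_Mpow n (Qs a b)" unfolding bounded_in_Mpow_def Qs_def by blast
    moreover have "topspace T = (\<Union>t\<in>Qs a b. U t)"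
      using e UX unfolding C_def X_def Qs_def by auto
    ultimately show False using nq by blast
  qed
  have famG: "t \<in> Mpow n \<Longrightarrow> t @ x \<in> {t @ x | t x. t \<in> P \<and> x \<in> U t} \<longleftrightarrow> t \<in> P \<and> x \<in> U t" for t x
  proof
    assume t: "t \<in> Mpow n" and "t @ x \<in> {t @ x | t x. t \<in> P \<and> x \<in> U t}"
    then obtain t' x' where e: "t @ x = t' @ x'" and t': "t' \<in> P" "x' \<in> U t'" by blast
    have "length t = length t'" using t t' Psub by (auto simp: Mpow_def)
    then have "t = t'" "x = x'" using e by auto
    then show "t \<in> P \<and> x \<in> U t" using t' by simp
  qed blast
  define E where "E = {vs \<in> Mpow ((2+m)+n). drop (2+m) vs \<in> P \<and>
      ((\<forall>i<n. vs ! 0 < vs ! (2+m+i) \<and> vs ! (2+m+i) < vs ! 1) \<and>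
       drop (2+m) vs @ take m (drop 2 vs) \<in> {t @ x | t x. t \<in> P \<and> x \<in> U t})}"
  have Ein: "E \<in> S ((2+m)+n)"
    unfolding E_def
  proof (rule st_conj[OF st lcyl[OF st P]], rule st_conj[OF st])
    show "{ys \<in> Mpow (2 + m + n). \<forall>i<n. ys ! 0 < ys ! (2 + m + i) \<and> ys ! (2 + m + i) < ys ! 1} \<in> S (2 + m + n)"
      by (rule st_all[OF st], rule st_conj[OF st]; rule lt_at[OF st lt]) auto
    have "{ys \<in> Mpow (2 + m + n). drop (2 + m) ys @ take m (drop 2 ys) \<in> {t @ x | t x. t \<in> P \<and> x \<in> U t}} \<in> S (2 + m + n)"
    proof (rule pre2[OF st G, where f = "\<lambda>l. if l < n then 2+m+l else 2 + (l - n)"], goal_cases)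
      case 1
      show ?case by auto
    next
      case 2
      show ?case
      proof
        fix ys :: "'a list" assume ys: "ys \<in> Mpow (2 + m + n)"
        show "drop (2 + m) ys @ take m (drop 2 ys) =
          map (\<lambda>i. ys ! (if i < n then 2 + m + i else 2 + (i - n))) [0..<n + m]"
          by (rule nth_equalityI) (use ys in \<open>auto simp: Mpow_def nth_append\<close>)
      qed
    qed
    then show "{ys \<in> Mpow (2 + m + n). drop (2 + m) ys @ take m (drop 2 ys) \<in> {t @ x | t x. t \<in> P \<and> x \<in> U t}} \<in> S (2 + m + n)" .
  qed
  define F where "F = {ws \<in> Mpow (2+m). \<exists>t\<in>P. (\<forall>i<n. ws ! 0 < t ! i \<and> t ! i < ws ! 1) \<and> drop 2 ws \<in> U t}"
  have "take (2+m) ` E \<in> S (2+m)" by (rule proj[OF st Ein])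
  moreover have "take (2+m) ` E = F"
  proof (rule set_eqI, rule iffI)
    fix ws assume "ws \<in> take (2+m) ` E"
    then obtain vs where vs: "vs \<in> E" and ws: "ws = take (2+m) vs" by blast
    have len: "length vs = 2+m+n" using vs by (simp add: E_def Mpow_def)
    let ?t = "drop (2+m) vs"
    have tM: "?t \<in> Mpow n" using len by (simp add: Mpow_def)
    have d: "drop 2 ws = take m (drop 2 vs)" using ws by (simp add: take_drop)
    have "?t \<in> P" "drop 2 ws \<in> U ?t" using vs famG[OF tM] d by (auto simp: E_def)
    moreover have "\<forall>i<n. ws ! 0 < ?t ! i \<and> ?t ! i < ws ! 1" using vs ws len by (auto simp: E_def)
    moreover have "ws \<in> Mpow (2+m)" using ws len by (simp add: Mpow_def)
    ultimately show "ws \<in> F" unfolding F_def by blast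
  next
    fix ws assume "ws \<in> F"
    then obtain t where ws: "ws \<in> Mpow (2+m)" and t: "t \<in> P" "\<forall>i<n. ws ! 0 < t ! i \<and> t ! i < ws ! 1"
      "drop 2 ws \<in> U t" unfolding F_def by blast
    have lt': "length t = n" using t Psub by (auto simp: Mpow_def)
    have lw: "length ws = 2+m" using ws by (simp add: Mpow_def)
    have n0: "(ws @ t) ! 0 = ws ! 0" "(ws @ t) ! 1 = ws ! 1" using lw by (simp_all add: nth_append)
    have ni: "(ws @ t) ! (2+m+i) = t ! i" for i using lw by (simp add: nth_append)
    have dr: "drop (2+m) (ws @ t) = t" using lw by simp
    have tk: "take m (drop 2 (ws @ t)) = drop 2 ws" using lw by simp
    have g: "t @ drop 2 ws \<in> {t @ x | t x. t \<in> P \<and> x \<in> U t}" using t by blast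
    have "ws @ t \<in> Mpow ((2+m)+n)" using lw lt' by (simp add: Mpow_def)
    then have "ws @ t \<in> E" unfolding E_def using n0 ni dr tk g t by simp
    moreover have "take (2+m) (ws @ t) = ws" using lw by simp
    ultimately show "ws \<in> take (2+m) ` E" by force
  qed
  ultimately have Fin: "F \<in> S (2+m)" by simp
  define D where "D = {ws \<in> Mpow (2+m). ws ! 0 < ws ! 1 \<and> (drop 2 ws \<in> X \<and>
     \<not> (\<exists>t\<in>P. (\<forall>i<n. ws ! 0 < t ! i \<and> t ! i < ws ! 1) \<and> drop 2 ws \<in> U t))}"
  have Din: "D \<in> S (2+m)"
    unfolding D_def
  proof (rule st_conj[OF st lt_at[OF st lt]], simp, simp, rule st_conj[OF st lcyl[OF st X]], rule st_neg[OF st])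
    show "{ys \<in> Mpow (2 + m). \<exists>t\<in>P. (\<forall>i<n. ys ! 0 < t ! i \<and> t ! i < ys ! 1) \<and> drop 2 ys \<in> U t} \<in> S (2 + m)"
      using Fin unfolding F_def .
  qed
  have fam: "definable_family S 2 m \<Sigma> C"
    unfolding definable_family_def
  proof (intro conjI)
    show "\<Sigma> \<in> S 2" unfolding \<Sigma>_def using lt .
    show "\<forall>t\<in>\<Sigma>. C t \<subseteq> Mpow m" unfolding C_def using Xsub by blast
    have "{t @ x |t x. t \<in> \<Sigma> \<and> x \<in> C t} = D"
    proof (rule set_eqI, rule iffI)
      fix ws assume "ws \<in> {t @ x |t x. t \<in> \<Sigma> \<and> x \<in> C t}"
      then obtain a b x where ws: "ws = [a, b] @ x" and ab: "a < b" and x: "x \<in> C [a, b]"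
        unfolding \<Sigma>_def by blast
      have "x \<in> Mpow m" using x Xsub unfolding C_def by blast
      then show "ws \<in> D" using ws ab x unfolding D_def C_def Qs_def by (auto simp: Mpow_def)
    next
      fix ws assume ws: "ws \<in> D"
      then have "length ws = 2 + m" by (simp add: D_def Mpow_def)
      then obtain a b x where w: "ws = a # b # x"
        by (metis Suc_length_conv add_2_eq_Suc)
      have wD: "a # b # x \<in> D" using ws w by simp
      then have ab: "a < b" and xX: "x \<in> X"
        and nx: "\<not> (\<exists>t\<in>P. (\<forall>i<n. a < t ! i \<and> t ! i < b) \<and> x \<in> U t)"
        unfolding D_def by simp_all
      have xC: "x \<in> C [a, b]" unfolding C_def Qs_def using xX nx by simp
      have "[a, b] \<in> \<Sigma>" using ab unfolding \<Sigma>_def by blast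
      moreover have "ws = [a, b] @ x" using w by simp
      ultimately show "ws \<in> {t @ x |t x. t \<in> \<Sigma> \<and> x \<in> C t}" using xC by blast
    qed
    then show "{t @ x |t x. t \<in> \<Sigma> \<and> x \<in> C t} \<in> S (2 + m)" using Din by simp
  qed
  obtain a0 :: 'a where True by simp
  obtain b0 where "a0 < b0" using dn unfolding ordered_group_dense_no_endpoints_def by blast
  then have Sne: "\<Sigma> \<noteq> {}" unfolding \<Sigma>_def by blast
  have closed: "\<forall>s\<in>\<Sigma>. closedin T (C s) \<and> C s \<noteq> {}"
  proof
    fix s assume "s \<in> \<Sigma>"
    then obtain a b where s: "s = [a, b]" unfolding \<Sigma>_def by blast
    have "closedin T (C s)" unfolding C_def X_def
      using assms(8) unfolding Qs_def by (intro closedin_diff closedin_topspace openin_Union) auto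
    then show "closedin T (C s) \<and> C s \<noteq> {}" using Cne s by simp
  qed
  have filt: "\<forall>s1\<in>\<Sigma>. \<forall>s2\<in>\<Sigma>. \<exists>s3\<in>\<Sigma>. C s3 \<subseteq> C s1 \<inter> C s2"
  proof (intro ballI)
    fix s1 s2 assume "s1 \<in> \<Sigma>" "s2 \<in> \<Sigma>"
    then obtain a1 b1 a2 b2 where s: "s1 = [a1, b1]" "s2 = [a2, b2]" "a1 < b1" "a2 < b2"
      unfolding \<Sigma>_def by blast
    have inS: "[min a1 a2, max b1 b2] \<in> \<Sigma>" using s unfolding \<Sigma>_def by (auto simp: min_def max_def)
    have mono: "Qs a b \<subseteq> Qs a' b'" if "a' \<le> a" "b \<le> b'" for a b a' b'
      unfolding Qs_def using that by (auto intro: le_less_trans less_le_trans)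
    have q: "Qs a1 b1 \<subseteq> Qs (min a1 a2) (max b1 b2)" "Qs a2 b2 \<subseteq> Qs (min a1 a2) (max b1 b2)"
      by (rule mono; simp)+
    have "C [min a1 a2, max b1 b2] \<subseteq> C s1 \<inter> C s2"
      unfolding C_def s using q by auto
    then show "\<exists>s3\<in>\<Sigma>. C s3 \<subseteq> C s1 \<inter> C s2" using inS by blast
  qed
  have "{x \<in> topspace T. \<forall>s\<in>\<Sigma>. x \<in> C s} \<noteq> {}"
    using assms(6) fam Sne closed filt unfolding definably_compact_def by blast
  then obtain x where x: "x \<in> X" "\<forall>s\<in>\<Sigma>. x \<in> C s" unfolding X_def by blast
  then obtain t where t: "t \<in> P" "x \<in> U t" using assms(9) unfolding X_def by blast
  obtain a where a: "\<forall>y\<in>set t. a < y" using lower_bound[OF dn] by blast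
  obtain b where b: "\<forall>y\<in>insert a (set t). y < b" using upper_bound[OF dn] by blast
  have "[a, b] \<in> \<Sigma>" using b unfolding \<Sigma>_def by auto
  moreover have "t \<in> Qs a b" unfolding Qs_def using t a b Psub by (auto simp: Mpow_def)
  ultimately show False using x t unfolding C_def by auto
qed

end
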